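(* Let $\mathsf{Obs}$ be an observation function over $\Sigma$ and $\Omega$ a distribution of $\Sigma$ with $\Omega\models\mathsf{Obs}$. Let $\Sigma_i\in\Omega$ and let $\sigma\in\Sigma^\star$ be such that $\sigma|_{\Sigma_i}\notin\mathsf{Dom}(\mathsf{Obs}_{\Sigma_i})$ and, for every $\Sigma_j\in\Omega\setminus\{\Sigma_i\}$, $\sigma|_{\Sigma_j}\in\mathsf{Dom}(\mathsf{Obs}_{\Sigma_j})$ and $\mathsf{Obs}_{\Sigma_j}(\sigma|_{\Sigma_j})=+$. Then for each $b\in\{+,-\}$, $\Omega\models\mathsf{Obs}\cup\{(\sigma,b)\}$.
   Context: $\sigma|_{\Sigma'}$ denotes projection of a word onto $\Sigma'$ (subsequence of symbols in $\Sigma'$), lifted elementwise to sets. A distribution of $\Sigma$ is a finite set $\Omega=\{\Sigma_1,\dots,\Sigma_n\}$ of subsets of $\Sigma$ with union $\Sigma$. An observation function over $\Sigma$ is a partial function $\mathsf{Obs}:\Sigma^\star\rightharpoonup\{+,-\}$ with finite domain; it is identified with the set of pairs $\{(\sigma,\mathsf{Obs}(\sigma))\}$, so $\mathsf{Obs}\cup\{(\sigma,b)\}$ (for $\sigma\notin\mathsf{Dom}(\mathsf{Obs})$) is the extension mapping $\sigma$ to $b$. $\mathcal L\models\mathsf{Obs}$ means: for all $\sigma\in\mathsf{Dom}(\mathsf{Obs})$, $\sigma\in\mathcal L\iff\mathsf{Obs}(\sigma)=+$. $\mathcal L$ is a product language over $\Omega$ if $\mathcal L=\{w\mid\forall i.\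 w|_{\Sigma_i}\in\mathcal L_i\}$ for some $\mathcal L_i\subseteq\Sigma_i^\star$. $\Omega\models\mathsf{Obs}$ means there is a product language $\mathcal L$ over $\Omega$ with $\mathcal L\models\mathsf{Obs}$. For $\Sigma'\subseteq\Sigma$, the local observation function $\mathsf{Obs}_{\Sigma'}$ has domain $\mathsf{Dom}(\mathsf{Obs})|_{\Sigma'}$, and $\mathsf{Obs}_{\Sigma'}(\sigma')=+$ iff some $\sigma\in\mathsf{Dom}(\mathsf{Obs})$ has $\sigma|_{\Sigma'}=\sigma'$ and $\mathsf{Obs}(\sigma)=+$, else $-$. *)

theory Defs
  imports Main
begin

text \<open>Words over an alphabet are lists; + is represented by True, - by False.\<close>

definition proj :: "'a set \<Rightarrow> 'a list \<Rightarrow> 'a list" where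
  "proj S w = filter (\<lambda>x. x \<in> S) w"

definition distribution :: "'a set \<Rightarrow> 'a set set \<Rightarrow> bool" where
  "distribution \<Sigma> \<Omega> \<longleftrightarrow> finite \<Omega> \<and> (\<forall>S\<in>\<Omega>. S \<subseteq> \<Sigma>) \<and> \<Union>\<Omega> = \<Sigma>"

definition observation :: "'a set \<Rightarrow> ('a list \<rightharpoonup> bool) \<Rightarrow> bool" where
  "observation \<Sigma> Obs \<longleftrightarrow> finite (dom Obs) \<and> dom Obs \<subseteq> lists \<Sigma>"

definition lang_models :: "'a list set \<Rightarrow> ('a list \<rightharpoonup> bool) \<Rightarrow> bool" where
  "lang_models L Obs \<longleftrightarrow> (\<forall>w\<in>dom Obs. (w \<in> L \<longleftrightarrow> Obs w = Some True))"

definition product_language :: "'a set \<Rightarrow> 'a set set \<Rightarrow> 'a list set \<Rightarrow> bool" where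
  "product_language \<Sigma> \<Omega> L \<longleftrightarrow>
     (\<exists>Ls :: 'a set \<Rightarrow> 'a list set. (\<forall>S\<in>\<Omega>. Ls S \<subseteq> lists S) \<and>
        L = {w \<in> lists \<Sigma>. \<forall>S\<in>\<Omega>. proj S w \<in> Ls S})"

definition dist_models :: "'a set \<Rightarrow> 'a set set \<Rightarrow> ('a list \<rightharpoonup> bool) \<Rightarrow> bool" where
  "dist_models \<Sigma> \<Omega> Obs \<longleftrightarrow> (\<exists>L. product_language \<Sigma> \<Omega> L \<and> lang_models L Obs)"

definition local_obs :: "('a list \<rightharpoonup> bool) \<Rightarrow> 'a set \<Rightarrow> ('a list \<rightharpoonup> bool)" where
  "local_obs Obs S w' =
     (if w' \<in> proj S ` dom Obs
      then Some (\<exists>w\<in>dom Obs. proj S w = w' \<and> Obs w = Some True)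
      else None)"

end

theory Submission
  imports Defs
begin

theorem mainTheorem6:
  fixes \<Sigma> :: "'a set" and \<Omega> :: "'a set set" and Obs :: "'a list \<rightharpoonup> bool"
    and Si :: "'a set" and \<sigma> :: "'a list" and b :: bool
  assumes "observation \<Sigma> Obs"
    and "distribution \<Sigma> \<Omega>"
    and "dist_models \<Sigma> \<Omega> Obs"
    and "Si \<in> \<Omega>"
    and "\<sigma> \<in> lists \<Sigma>"
    and "proj Si \<sigma> \<notin> dom (local_obs Obs Si)"
    and "\<forall>Sj\<in>\<Omega> - {Si}. local_obs Obs Sj (proj Sj \<sigma>) = Some True"
  shows "dist_models \<Sigma> \<Omega> (Obs(\<sigma> \<mapsto> b))"
proof -
  obtain L Ls where Ls: "\<forall>S\<in>\<Omega>. Ls S \<subseteq> lists S"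
    and LD: "L = {w \<in> lists \<Sigma>. \<forall>S\<in>\<Omega>. proj S w \<in> Ls S}"
    and LM: "lang_models L Obs"
    using assms(3) unfolding dist_models_def product_language_def by blast
  define p where "p = proj Si \<sigma>"
  have pnot: "\<And>w. w \<in> dom Obs \<Longrightarrow> proj Si w \<noteq> p"
    using assms(6) unfolding p_def local_obs_def dom_def by (auto split: if_splits) (metis (mono_tags, lifting) image_eqI mem_Collect_eq)
  have sigdom: "\<sigma> \<notin> dom Obs" using pnot p_def by blast
  have plist: "p \<in> lists Si" unfolding p_def proj_def by auto
  have others: "\<And>Sj. Sj \<in> \<Omega> \<Longrightarrow> Sj \<noteq> Si \<Longrightarrow> proj Sj \<sigma> \<in> Ls Sj"
  proof -
    fix Sj assume "Sj \<in> \<Omega>" "Sj \<noteq> Si"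
    then have "local_obs Obs Sj (proj Sj \<sigma>) = Some True" using assms(7) by blast
    then obtain w where w: "w \<in> dom Obs" "proj Sj w = proj Sj \<sigma>" "Obs w = Some True"
      unfolding local_obs_def by (auto split: if_splits)
    then have "w \<in> L" using LM unfolding lang_models_def by blast
    then show "proj Sj \<sigma> \<in> Ls Sj" using LD w \<open>Sj \<in> \<Omega>\<close> by auto
  qed
  define Ls' where "Ls' = Ls(Si := (if b then insert p (Ls Si) else Ls Si - {p}))"
  define L' where "L' = {w \<in> lists \<Sigma>. \<forall>S\<in>\<Omega>. proj S w \<in> Ls' S}"
  have "product_language \<Sigma> \<Omega> L'"
    unfolding product_language_def L'_def
    apply (rule exI[of _ Ls'])
    using Ls plist by (auto simp: Ls'_def)
  moreover have "lang_models L' (Obs(\<sigma> \<mapsto> b))"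
    unfolding lang_models_def
  proof
    fix w assume "w \<in> dom (Obs(\<sigma> \<mapsto> b))"
    then consider "w = \<sigma>" | "w \<noteq> \<sigma>" "w \<in> dom Obs" by auto
    then show "(w \<in> L') = ((Obs(\<sigma> \<mapsto> b)) w = Some True)"
    proof cases
      case 1
      have "\<sigma> \<in> L' \<longleftrightarrow> b"
        using assms(5) others assms(4) unfolding L'_def Ls'_def p_def by auto
      then show ?thesis using 1 by simp
    next
      case 2
      have "w \<in> L' \<longleftrightarrow> w \<in> L"
        using pnot[OF 2(2)] unfolding L'_def LD Ls'_def by auto
      then show ?thesis using 2 LM unfolding lang_models_def by auto
    qed
  qed
  ultimately show ?thesis unfolding dist_models_def by blast
qed

end
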